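(* Let $\delta>0$, $L=3/(4\delta)$ and $\tilde L=(1+\epsilon)L$ with $\epsilon=10^{-6}$. Let data $(\mathbf{x}_i,y_i)$, $i=1,\dots,n$, with $\mathbf{x}_i=(x_{i1},\dots,x_{ip})\in\mathbb{R}^p$, $y_i\in\{-1,1\}$, be standardized so that $\frac1n\sum_i x_{ij}=0$ and $\frac1n\sum_i x_{ij}^2=1$ for every $j$. Fix $\tilde\beta_0,\tilde{\boldsymbol\beta}$, set $r_i=y_i(\tilde\beta_0+\mathbf{x}_i^\top\tilde{\boldsymbol\beta})$, fix $j$, and let $P$ be any real-valued function of $\beta_j$ (the penalty). Define $$F(\beta_j)=\frac1n\sum_{i=1}^n B_\delta\big(r_i+y_ix_{ij}(\beta_j-\tilde\beta_j)\big)+P(\beta_j),$$ $$Q(\beta_j)=\frac{1}{n}\sum_{i=1}^n B_\delta(r_i)+\frac{1}{n}\sum_{i=1}^n B_\delta'(r_i)y_ix_{ij}(\beta_j-\tilde\beta_j)+\frac{\tilde L}{2}(\beta_j-\tilde\beta_j)^2+P(\beta_j).$$ Then $F(\beta_j)=Q(\beta_j)$ if $\beta_j=\tilde\beta_j$, and $F(\beta_j)<Q(\beta_j)$ if $\beta_j\neq\tilde\beta_j$.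
   Context: $B_\delta$ (the BernSVM loss) is defined by $B_\delta(t)=(1-t)_+$ if $|t-1|>\delta$ and $B_\delta(t)=g_\delta(t)=\frac{1}{8\delta^{3}}\{\frac{(1-t+\delta)^{4}}{2}-(1-t-\delta)(1-t+\delta)^{3}\}$ if $|t-1|\le\delta$; it is twice continuously differentiable. *)

theory Defs
  imports "HOL-Analysis.Analysis"
begin

definition bern_g :: "real \<Rightarrow> real \<Rightarrow> real" where
  "bern_g \<delta> t = (1 / (8 * \<delta> ^ 3)) *
     ((1 - t + \<delta>) ^ 4 / 2 - (1 - t - \<delta>) * (1 - t + \<delta>) ^ 3)"

definition bern :: "real \<Rightarrow> real \<Rightarrow> real" where
  "bern \<delta> t = (if \<bar>t - 1\<bar> > \<delta> then max (1 - t) 0 else bern_g \<delta> t)"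

end

theory Submission
  imports Defs
begin

definition gd :: "real \<Rightarrow> real \<Rightarrow> real" where
  "gd \<delta> t = -((1 - t + \<delta>)^2 * (2*\<delta> - 1 + t)) / (4*\<delta>^3)"
definition gdd :: "real \<Rightarrow> real \<Rightarrow> real" where
  "gdd \<delta> t = 3*(\<delta>^2 - (1 - t)^2) / (4*\<delta>^3)"
definition bd :: "real \<Rightarrow> real \<Rightarrow> real" where
  "bd \<delta> t = (if t < 1 - \<delta> then -1 else if t > 1 + \<delta> then 0 else gd \<delta> t)"
definition bdd :: "real \<Rightarrow> real \<Rightarrow> real" where
  "bdd \<delta> t = (if t < 1 - \<delta> then 0 else if t > 1 + \<delta> then 0 else gdd \<delta> t)"

lemma glue:
  fixes f g h :: "real \<Rightarrow> real"
  assumes g: "(g has_real_derivative D) (at a)" and h: "(h has_real_derivative D) (at a)"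
    and e: "e > 0"
    and fg: "\<And>x. x \<le> a \<Longrightarrow> dist x a < e \<Longrightarrow> f x = g x"
    and fh: "\<And>x. x \<ge> a \<Longrightarrow> dist x a < e \<Longrightarrow> f x = h x"
  shows "(f has_real_derivative D) (at a)"
proof -
  have 1: "(f has_real_derivative D) (at a within {..a})"
    by (rule has_field_derivative_transform_within[OF has_field_derivative_at_within[OF g] e])
       (auto simp: fg)
  have 2: "(f has_real_derivative D) (at a within {a..})"
    by (rule has_field_derivative_transform_within[OF has_field_derivative_at_within[OF h] e])
       (auto simp: fh)
  have U: "{..a} \<union> {a..} = (UNIV::real set)" by auto
  from 1 2 have "(f has_real_derivative D) (at a within ({..a} \<union> {a..}))"
    unfolding has_field_derivative_iff Lim_within_Un by simp
  then show ?thesis unfolding U .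
qed

lemma gd_deriv: "\<delta> > 0 \<Longrightarrow> (bern_g \<delta> has_real_derivative gd \<delta> t) (at t)"
  unfolding bern_g_def [abs_def] gd_def
  by (auto intro!: derivative_eq_intros simp: field_simps power2_eq_square power3_eq_cube eval_nat_numeral)

lemma gdd_deriv: "\<delta> > 0 \<Longrightarrow> (gd \<delta> has_real_derivative gdd \<delta> t) (at t)"
  unfolding gdd_def [abs_def] gd_def [abs_def]
  by (auto intro!: derivative_eq_intros simp: field_simps power2_eq_square power3_eq_cube eval_nat_numeral)

lemma vals:
  assumes d: "\<delta> > 0"
  shows "bern_g \<delta> (1 - \<delta>) = \<delta>" "bern_g \<delta> (1 + \<delta>) = 0"
    "gd \<delta> (1 - \<delta>) = -1" "gd \<delta> (1 + \<delta>) = 0"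
  using d by (auto simp: bern_g_def gd_def field_simps eval_nat_numeral)
lemma bern_left: "\<delta> > 0 \<Longrightarrow> x \<le> 1 - \<delta> \<Longrightarrow> bern \<delta> x = 1 - x"
  by (cases "x = 1 - \<delta>") (auto simp: bern_def vals)
lemma bern_right: "\<delta> > 0 \<Longrightarrow> x \<ge> 1 + \<delta> \<Longrightarrow> bern \<delta> x = 0"
  by (cases "x = 1 + \<delta>") (auto simp: bern_def vals)
lemma bern_mid: "\<delta> > 0 \<Longrightarrow> 1 - \<delta> \<le> x \<Longrightarrow> x \<le> 1 + \<delta> \<Longrightarrow> bern \<delta> x = bern_g \<delta> x"
  by (auto simp: bern_def)
lemma bd_left: "\<delta> > 0 \<Longrightarrow> x \<le> 1 - \<delta> \<Longrightarrow> bd \<delta> x = -1"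
  by (cases "x = 1 - \<delta>") (auto simp: bd_def vals)
lemma bd_right: "\<delta> > 0 \<Longrightarrow> x \<ge> 1 + \<delta> \<Longrightarrow> bd \<delta> x = 0"
  by (cases "x = 1 + \<delta>") (auto simp: bd_def vals)
lemma bd_mid: "\<delta> > 0 \<Longrightarrow> 1 - \<delta> \<le> x \<Longrightarrow> x \<le> 1 + \<delta> \<Longrightarrow> bd \<delta> x = gd \<delta> x"
  by (auto simp: bd_def)

lemma bern_deriv:
  assumes d: "\<delta> > 0"
  shows "(bern \<delta> has_real_derivative bd \<delta> t) (at t)"
proof -
  have lin: "((\<lambda>x. 1 - x) has_real_derivative -1) (at t)" for t :: real
    by (auto intro!: derivative_eq_intros)
  have zero: "((\<lambda>x. 0) has_real_derivative 0) (at t)" for t :: real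
    by (auto intro!: derivative_eq_intros)
  have g1: "gd \<delta> (1 - \<delta>) = -1" "gd \<delta> (1 + \<delta>) = 0" using d
    by (auto simp: gd_def field_simps power2_eq_square power3_eq_cube)
  have b1: "bern_g \<delta> (1 - \<delta>) = \<delta>" "bern_g \<delta> (1 + \<delta>) = 0" using d
    by (auto simp: bern_g_def field_simps eval_nat_numeral)
  consider "t < 1 - \<delta>" | "t = 1 - \<delta>" | "1 - \<delta> < t \<and> t < 1 + \<delta>" | "t = 1 + \<delta>" | "t > 1 + \<delta>"
    by linarith
  then show ?thesis
  proof cases
    case 1
    have e: "bd \<delta> t = -1" using 1 d by (auto simp: bd_def bdd_def)
    show ?thesis unfolding e
      by (rule has_field_derivative_transform_within_open[OF lin[of t] open_lessThan[of "1 - \<delta>"]])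
         (use 1 d in \<open>auto simp: bd_def bern_def\<close>)
  next
    case 2
    have e: "bd \<delta> t = -1" using 2 g1 b1 d by (auto simp: bd_def bdd_def)
    show ?thesis unfolding e
      by (rule glue[where g="\<lambda>x. 1 - x" and h="bern_g \<delta>" and e=\<delta>])
         (use 2 lin gd_deriv[OF d, of "1 - \<delta>", unfolded g1] d bern_left bern_mid in \<open>auto simp: dist_real_def\<close>)
  next
    case 3
    have e: "bd \<delta> t = gd \<delta> t" using 3 d by (auto simp: bd_def bdd_def)
    show ?thesis unfolding e
      by (rule has_field_derivative_transform_within_open[OF gd_deriv[OF d] open_greaterThanLessThan[of "1 - \<delta>" "1 + \<delta>"]])
         (use 3 d in \<open>auto simp: bd_def bern_def\<close>)
  next
    case 4
    have e: "bd \<delta> t = 0" using 4 g1 b1 d by (auto simp: bd_def bdd_def)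
    show ?thesis unfolding e
      by (rule glue[where g="bern_g \<delta>" and h="\<lambda>x. 0" and e=\<delta>])
         (use 4 zero gd_deriv[OF d, of "1 + \<delta>", unfolded g1] d bern_right bern_mid in \<open>auto simp: dist_real_def\<close>)
  next
    case 5
    have e: "bd \<delta> t = 0" using 5 d by (auto simp: bd_def bdd_def)
    show ?thesis unfolding e
      by (rule has_field_derivative_transform_within_open[OF zero[of t] open_greaterThan[of "1 + \<delta>"]])
         (use 5 d in \<open>auto simp: bd_def bern_def\<close>)
  qed
qed

lemma bd_deriv:
  assumes d: "\<delta> > 0"
  shows "(bd \<delta> has_real_derivative bdd \<delta> t) (at t)"
proof -
  have cst: "((\<lambda>x. c) has_real_derivative 0) (at t)" for t c :: real
    by (auto intro!: derivative_eq_intros)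
  have g1: "gd \<delta> (1 - \<delta>) = -1" "gd \<delta> (1 + \<delta>) = 0" using d
    by (auto simp: gd_def field_simps power2_eq_square power3_eq_cube)
  have b1: "gdd \<delta> (1 - \<delta>) = 0" "gdd \<delta> (1 + \<delta>) = 0" using d
    by (auto simp: gdd_def field_simps eval_nat_numeral)
  consider "t < 1 - \<delta>" | "t = 1 - \<delta>" | "1 - \<delta> < t \<and> t < 1 + \<delta>" | "t = 1 + \<delta>" | "t > 1 + \<delta>"
    by linarith
  then show ?thesis
  proof cases
    case 1
    have e: "bdd \<delta> t = 0" using 1 d by (auto simp: bd_def bdd_def)
    show ?thesis unfolding e
      by (rule has_field_derivative_transform_within_open[OF cst[of "-1" t] open_lessThan[of "1 - \<delta>"]])
         (use 1 d in \<open>auto simp: bd_def bdd_def\<close>)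
  next
    case 2
    have e: "bdd \<delta> t = 0" using 2 g1 b1 d by (auto simp: bd_def bdd_def)
    show ?thesis unfolding e
      by (rule glue[where g="\<lambda>x. -1" and h="gd \<delta>" and e=\<delta>])
         (use 2 cst gdd_deriv[OF d, of "1 - \<delta>", unfolded b1] d bd_left bd_mid in \<open>auto simp: dist_real_def\<close>)
  next
    case 3
    have e: "bdd \<delta> t = gdd \<delta> t" using 3 d by (auto simp: bd_def bdd_def)
    show ?thesis unfolding e
      by (rule has_field_derivative_transform_within_open[OF gdd_deriv[OF d] open_greaterThanLessThan[of "1 - \<delta>" "1 + \<delta>"]])
         (use 3 d in \<open>auto simp: bd_def bdd_def\<close>)
  next
    case 4
    have e: "bdd \<delta> t = 0" using 4 g1 b1 d by (auto simp: bd_def bdd_def)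
    show ?thesis unfolding e
      by (rule glue[where g="gd \<delta>" and h="\<lambda>x. 0" and e=\<delta>])
         (use 4 cst gdd_deriv[OF d, of "1 + \<delta>", unfolded b1] d bd_right bd_mid in \<open>auto simp: dist_real_def\<close>)
  next
    case 5
    have e: "bdd \<delta> t = 0" using 5 d by (auto simp: bd_def bdd_def)
    show ?thesis unfolding e
      by (rule has_field_derivative_transform_within_open[OF cst[of 0 t] open_greaterThan[of "1 + \<delta>"]])
         (use 5 d in \<open>auto simp: bd_def bdd_def\<close>)
  qed
qed

lemma bdd_bounds:
  assumes d: "\<delta> > 0"
  shows "0 \<le> bdd \<delta> t \<and> bdd \<delta> t \<le> 3 / (4 * \<delta>)"
proof -
  have "0 \<le> gdd \<delta> t \<and> gdd \<delta> t \<le> 3 / (4 * \<delta>)" if "\<bar>t - 1\<bar> \<le> \<delta>"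
  proof -
    have "(1 - t)^2 \<le> \<delta>^2" using that d
      by (metis abs_le_square_iff abs_minus_commute abs_of_pos)
    then have a: "0 \<le> \<delta>^2 - (1-t)^2" and b: "\<delta>^2 - (1-t)^2 \<le> \<delta>^2" by auto
    have "gdd \<delta> t = 3 * (\<delta>^2 - (1-t)^2) / (4*\<delta>^3)" by (simp add: gdd_def)
    moreover have "0 \<le> 3 * (\<delta>^2 - (1-t)^2) / (4*\<delta>^3)" using a d by simp
    moreover have "3 * (\<delta>^2 - (1-t)^2) / (4*\<delta>^3) \<le> 3 * \<delta>^2 / (4*\<delta>^3)"
      using b d by (intro divide_right_mono) auto
    moreover have "3 * \<delta>^2 / (4*\<delta>^3) = 3 / (4 * \<delta>)" using d
      by (simp add: field_simps power2_eq_square power3_eq_cube)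
    ultimately show ?thesis by linarith
  qed
  then show ?thesis using d by (auto simp: bdd_def)
qed

lemma bd_lip:
  assumes d: "\<delta> > 0" and ab: "a \<le> b"
  shows "0 \<le> bd \<delta> b - bd \<delta> a \<and> bd \<delta> b - bd \<delta> a \<le> 3 / (4 * \<delta>) * (b - a)"
proof
  have "bd \<delta> a \<le> bd \<delta> b"
  proof (rule DERIV_nonneg_imp_nondecreasing[OF ab])
    fix x
    show "\<exists>y. (bd \<delta> has_real_derivative y) (at x) \<and> 0 \<le> y"
      using bd_deriv[OF d, of x] bdd_bounds[OF d, of x] by blast
  qed
  then show "0 \<le> bd \<delta> b - bd \<delta> a" by simp
  have "(\<lambda>x. 3 / (4 * \<delta>) * x - bd \<delta> x) a \<le> (\<lambda>x. 3 / (4 * \<delta>) * x - bd \<delta> x) b"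
  proof (rule DERIV_nonneg_imp_nondecreasing[OF ab])
    fix x
    have "((\<lambda>x. 3 / (4 * \<delta>) * x - bd \<delta> x) has_real_derivative 3 / (4 * \<delta>) * 1 - bdd \<delta> x) (at x)"
      by (rule DERIV_diff[OF DERIV_cmult[OF DERIV_ident] bd_deriv[OF d]])
    then show "\<exists>y. ((\<lambda>x. 3 / (4 * \<delta>) * x - bd \<delta> x) has_real_derivative y) (at x) \<and> 0 \<le> y"
      using bdd_bounds[OF d, of x] d by fastforce
  qed
  then show "bd \<delta> b - bd \<delta> a \<le> 3 / (4 * \<delta>) * (b - a)" by (simp add: right_diff_distrib)
qed

lemma quad_bound:
  assumes d: "\<delta> > 0"
  shows "bern \<delta> (r + h) \<le> bern \<delta> r + bd \<delta> r * h + 3 / (8 * \<delta>) * h^2"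
proof -
  define L where "L = 3 / (4 * \<delta>)"
  define \<phi> where "\<phi> t = bern \<delta> r + bd \<delta> r * (t - r) + L / 2 * (t - r)^2 - bern \<delta> t" for t
  have D: "(\<phi> has_real_derivative bd \<delta> r + L * (t - r) - bd \<delta> t) (at t)" for t
    unfolding \<phi>_def[abs_def]
    by (auto intro!: derivative_eq_intros bern_deriv[OF d] simp: power2_eq_square algebra_simps)
  have "\<phi> r \<le> \<phi> (r + h)"
  proof (cases "h \<ge> 0")
    case True
    show ?thesis
    proof (rule DERIV_nonneg_imp_nondecreasing[of r "r + h" \<phi>])
      show "r \<le> r + h" using True by simp
      fix x assume "r \<le> x"
      then show "\<exists>y. (\<phi> has_real_derivative y) (at x) \<and> 0 \<le> y"
        using D[of x] bd_lip[OF d, of r x] unfolding L_def by fastforce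
    qed
  next
    case False
    show ?thesis
    proof (rule deriv_nonpos_imp_antimono[of "r + h" r \<phi>, OF D])
      show "r + h \<le> r" using False by simp
      fix x assume "x \<in> {r + h..r}"
      then show "bd \<delta> r + L * (x - r) - bd \<delta> x \<le> 0"
        using bd_lip[OF d, of x r, folded L_def] by (auto simp: algebra_simps)
    qed
  qed
  then show ?thesis unfolding \<phi>_def L_def by simp
qed

theorem proposition4:
  fixes \<delta> :: real and n p j :: nat
    and x :: "nat \<Rightarrow> nat \<Rightarrow> real" and y :: "nat \<Rightarrow> real"
    and \<beta>0t :: real and \<beta>t :: "nat \<Rightarrow> real"
    and P :: "real \<Rightarrow> real" and b :: real
  assumes "\<delta> > 0"
    and "j < p"
    and "\<And>i. i < n \<Longrightarrow> y i \<in> {-1, 1}"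
    and "\<And>k. k < p \<Longrightarrow> (1 / real n) * (\<Sum>i<n. x i k) = 0"
    and "\<And>k. k < p \<Longrightarrow> (1 / real n) * (\<Sum>i<n. (x i k)\<^sup>2) = 1"
  defines "L \<equiv> 3 / (4 * \<delta>)"
    and "\<epsilon> \<equiv> (10::real) powi (-6)"
  defines "Lt \<equiv> (1 + \<epsilon>) * L"
    and "r \<equiv> (\<lambda>i. y i * (\<beta>0t + (\<Sum>k<p. x i k * \<beta>t k)))"
  defines "F \<equiv> (\<lambda>bj. (1 / real n) * (\<Sum>i<n. bern \<delta> (r i + y i * x i j * (bj - \<beta>t j))) + P bj)"
    and "Q \<equiv> (\<lambda>bj. (1 / real n) * (\<Sum>i<n. bern \<delta> (r i))
              + (1 / real n) * (\<Sum>i<n. deriv (bern \<delta>) (r i) * y i * x i j * (bj - \<beta>t j))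
              + Lt / 2 * (bj - \<beta>t j)\<^sup>2 + P bj)"
  shows "(b = \<beta>t j \<longrightarrow> F b = Q b) \<and> (b \<noteq> \<beta>t j \<longrightarrow> F b < Q b)"
proof -
  note d = assms(1)
  have n0: "n \<noteq> 0" using assms(5)[OF assms(2)] by auto
  have dv: "deriv (bern \<delta>) = bd \<delta>"
    by (rule ext, rule DERIV_imp_deriv[OF bern_deriv[OF d]])
  define h where "h = b - \<beta>t j"
  have eps: "\<epsilon> > 0" unfolding \<epsilon>_def by simp
  have Lpos: "L > 0" unfolding L_def using d by simp
  have y2: "(y i)^2 = 1" if "i < n" for i using assms(3)[OF that] by auto
  have each: "bern \<delta> (r i + y i * x i j * h) \<le> bern \<delta> (r i) + bd \<delta> (r i) * y i * x i j * h
      + L / 2 * h^2 * (x i j)^2" if "i < n" for i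
  proof -
    have e2: "(y i * x i j * h)^2 = h^2 * (x i j)^2" using y2[OF that] by (simp add: power_mult_distrib)
    have e1: "3 / (8 * \<delta>) = L / 2" unfolding L_def by simp
    have q: "bern \<delta> (r i + y i * x i j * h) \<le> bern \<delta> (r i) + bd \<delta> (r i) * (y i * x i j * h) + L / 2 * (h^2 * (x i j)^2)"
      using quad_bound[OF d, of "r i" "y i * x i j * h"] unfolding e1 e2 .
    then show ?thesis by (simp add: ac_simps)
  qed
  have S: "(\<Sum>i<n. bern \<delta> (r i + y i * x i j * h)) \<le>
      (\<Sum>i<n. bern \<delta> (r i)) + (\<Sum>i<n. bd \<delta> (r i) * y i * x i j * h) + L / 2 * h^2 * (\<Sum>i<n. (x i j)^2)"
  proof -
    have "(\<Sum>i<n. bern \<delta> (r i + y i * x i j * h)) \<le>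
      (\<Sum>i<n. bern \<delta> (r i) + bd \<delta> (r i) * y i * x i j * h + L / 2 * h^2 * (x i j)^2)"
      by (rule sum_mono) (use each in auto)
    also have "\<dots> = (\<Sum>i<n. bern \<delta> (r i)) + (\<Sum>i<n. bd \<delta> (r i) * y i * x i j * h) + L / 2 * h^2 * (\<Sum>i<n. (x i j)^2)"
      by (simp add: sum.distrib sum_distrib_left)
    finally show ?thesis .
  qed
  have X: "(1 / real n) * (\<Sum>i<n. (x i j)^2) = 1" using assms(5)[OF assms(2)] .
  have FQ: "F b \<le> Q b - (Lt - L) / 2 * h^2"
  proof -
    have "F b = (1 / real n) * (\<Sum>i<n. bern \<delta> (r i + y i * x i j * h)) + P b"
      unfolding F_def h_def by simp
    also have "\<dots> \<le> (1 / real n) * ((\<Sum>i<n. bern \<delta> (r i)) + (\<Sum>i<n. bd \<delta> (r i) * y i * x i j * h) + L / 2 * h^2 * (\<Sum>i<n. (x i j)^2)) + P b"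
      using S n0 by (intro add_right_mono mult_left_mono) auto
    also have "\<dots> = (1 / real n) * (\<Sum>i<n. bern \<delta> (r i)) + (1 / real n) * (\<Sum>i<n. bd \<delta> (r i) * y i * x i j * h) + L / 2 * h^2 * ((1 / real n) * (\<Sum>i<n. (x i j)^2)) + P b"
      by (simp add: algebra_simps)
    also have "\<dots> = Q b - (Lt - L) / 2 * h^2"
      unfolding X Q_def dv h_def by (simp add: field_simps)
    finally show ?thesis .
  qed
  show ?thesis
  proof (intro conjI impI)
    assume "b = \<beta>t j"
    then show "F b = Q b" unfolding F_def Q_def by simp
  next
    assume "b \<noteq> \<beta>t j"
    then have "h^2 > 0" unfolding h_def by simp
    moreover have "Lt - L > 0" unfolding Lt_def using eps Lpos by (simp add: algebra_simps)
    ultimately have "(Lt - L) / 2 * h^2 > 0" by simp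
    then show "F b < Q b" using FQ by linarith
  qed
qed

end
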